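(* $\mathsf{G3iLL}$ has sequent interpolation: for all finite multisets of formulas $\Gamma,\Gamma'$ and every multiset $\Delta$ of at most one formula, if $\Gamma,\Gamma'\Rightarrow\Delta$ is derivable in $\mathsf{G3iLL}$, then there is a formula $\chi$ such that $\Gamma\Rightarrow\chi$ and $\Gamma',\chi\Rightarrow\Delta$ are derivable in $\mathsf{G3iLL}$ and every atom occurring in $\chi$ occurs both in $\Gamma$ and in $\Gamma'\cup\Delta$.
   Context: Formulas are built from the constant $\bot$ and propositional atoms (with $\bot$ not an atom) using $\wedge,\vee,\to$ and a unary modal operator $\bigcirc$. A sequent is $\Gamma\Rightarrow\Delta$ with $\Gamma,\Delta$ finite multisets of formulas, $\Delta$ containing at most one formula. The calculus $\mathsf{G3iLL}$ has axioms $\Gamma,p\Rightarrow p$ ($p$ an atom) and $\Gamma,\bot\Rightarrow\Delta$, and rules (premisses / conclusion): $R\wedge$: $\Gamma\Rightarrow\phi$, $\Gamma\Rightarrow\psi$ / $\Gamma\Rightarrow\phi\wedge\psi$; $L\wedge$: $\Gamma,\phi,\psi\Rightarrow\Delta$ / $\Gamma,\phi\wedge\psi\Rightarrow\Delta$; $R\vee$: $\Gamma\Rightarrow\phi_i$ / $\Gamma\Rightarrow\phi_0\vee\phi_1$ ($i=0,1$); $L\vee$: $\Gamma,\phi\Rightarrow\Delta$, $\Gamma,\psi\Rightarrow\Delta$ / $\Gamma,\phi\vee\psi\Rightarrow\Delta$; $R\to$: $\Gamma,\phi\Rightarrow\psi$ / $\Gamma\Rightarrow\phi\to\psi$; $L\to$: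 $\Gamma,\phi\to\psi\Rightarrow\phi$, $\Gamma,\psi\Rightarrow\Delta$ / $\Gamma,\phi\to\psi\Rightarrow\Delta$; $R\bigcirc$: $\Gamma\Rightarrow\phi$ / $\Gamma\Rightarrow\bigcirc\phi$; $L\bigcirc$: $\Gamma,\psi\Rightarrow\bigcirc\phi$ / $\Gamma,\bigcirc\psi\Rightarrow\bigcirc\phi$. *)

theory Defs
  imports Main "HOL-Library.Multiset"
begin

datatype 'a fm =
    Bot
  | At 'a
  | Conj "'a fm" "'a fm"
  | Disj "'a fm" "'a fm"
  | Imp "'a fm" "'a fm"
  | Circ "'a fm"

primrec atoms :: "'a fm \<Rightarrow> 'a set" where
  "atoms Bot = {}"
| "atoms (At p) = {p}"
| "atoms (Conj A B) = atoms A \<union> atoms B"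
| "atoms (Disj A B) = atoms A \<union> atoms B"
| "atoms (Imp A B) = atoms A \<union> atoms B"
| "atoms (Circ A) = atoms A"

definition atoms_ms :: "'a fm multiset \<Rightarrow> 'a set" where
  "atoms_ms M = (\<Union>A\<in>set_mset M. atoms A)"

inductive G3iLL :: "'a fm multiset \<Rightarrow> 'a fm multiset \<Rightarrow> bool" where
  ax: "G3iLL (add_mset (At p) \<Gamma>) {#At p#}"
| botL: "size \<Delta> \<le> 1 \<Longrightarrow> G3iLL (add_mset Bot \<Gamma>) \<Delta>"
| conjR: "G3iLL \<Gamma> {#A#} \<Longrightarrow> G3iLL \<Gamma> {#B#} \<Longrightarrow> G3iLL \<Gamma> {#Conj A B#}"
| conjL: "G3iLL (add_mset A (add_mset B \<Gamma>)) \<Delta> \<Longrightarrow> G3iLL (add_mset (Conj A B) \<Gamma>) \<Delta>"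
| disjR1: "G3iLL \<Gamma> {#A#} \<Longrightarrow> G3iLL \<Gamma> {#Disj A B#}"
| disjR2: "G3iLL \<Gamma> {#B#} \<Longrightarrow> G3iLL \<Gamma> {#Disj A B#}"
| disjL: "G3iLL (add_mset A \<Gamma>) \<Delta> \<Longrightarrow> G3iLL (add_mset B \<Gamma>) \<Delta> \<Longrightarrow>
           G3iLL (add_mset (Disj A B) \<Gamma>) \<Delta>"
| impR: "G3iLL (add_mset A \<Gamma>) {#B#} \<Longrightarrow> G3iLL \<Gamma> {#Imp A B#}"
| impL: "G3iLL (add_mset (Imp A B) \<Gamma>) {#A#} \<Longrightarrow> G3iLL (add_mset B \<Gamma>) \<Delta> \<Longrightarrow>
           G3iLL (add_mset (Imp A B) \<Gamma>) \<Delta>"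
| circR: "G3iLL \<Gamma> {#A#} \<Longrightarrow> G3iLL \<Gamma> {#Circ A#}"
| circL: "G3iLL (add_mset B \<Gamma>) {#Circ A#} \<Longrightarrow> G3iLL (add_mset (Circ B) \<Gamma>) {#Circ A#}"

end

theory Submission
  imports Defs
begin

lemma wk: "G3iLL G D \<Longrightarrow> G3iLL (add_mset C G) D"
proof (induction rule: G3iLL.induct)
  case (ax p \<Gamma>)
  have "G3iLL (add_mset (At p) (add_mset C \<Gamma>)) {#At p#}" by (rule G3iLL.ax)
  then show ?case by (simp only: add_mset_commute)
next
  case (botL \<Delta> \<Gamma>)
  have "G3iLL (add_mset Bot (add_mset C \<Gamma>)) \<Delta>" by (rule G3iLL.botL[OF botL])
  then show ?case by (simp only: add_mset_commute)
next
  case (conjR \<Gamma> A B) show ?case by (rule G3iLL.conjR[OF conjR.IH])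
next
  case (conjL A B \<Gamma> \<Delta>)
  have "G3iLL (add_mset A (add_mset B (add_mset C \<Gamma>))) \<Delta>"
    using conjL.IH by (simp only: add_mset_commute)
  then have "G3iLL (add_mset (Conj A B) (add_mset C \<Gamma>)) \<Delta>" by (rule G3iLL.conjL)
  then show ?case by (simp only: add_mset_commute)
next
  case (disjR1 \<Gamma> A B) show ?case by (rule G3iLL.disjR1[OF disjR1.IH])
next
  case (disjR2 \<Gamma> B A) show ?case by (rule G3iLL.disjR2[OF disjR2.IH])
next
  case (disjL A \<Gamma> \<Delta> B)
  have a: "G3iLL (add_mset A (add_mset C \<Gamma>)) \<Delta>"
    using disjL.IH(1) by (simp only: add_mset_commute)
  have b: "G3iLL (add_mset B (add_mset C \<Gamma>)) \<Delta>"
    using disjL.IH(2) by (simp only: add_mset_commute)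
  have "G3iLL (add_mset (Disj A B) (add_mset C \<Gamma>)) \<Delta>" by (rule G3iLL.disjL[OF a b])
  then show ?case by (simp only: add_mset_commute)
next
  case (impR A \<Gamma> B)
  have "G3iLL (add_mset A (add_mset C \<Gamma>)) {#B#}"
    using impR.IH by (simp only: add_mset_commute)
  then show ?case by (rule G3iLL.impR)
next
  case (impL A B \<Gamma> \<Delta>)
  have a: "G3iLL (add_mset (Imp A B) (add_mset C \<Gamma>)) {#A#}"
    using impL.IH(1) by (simp only: add_mset_commute)
  have b: "G3iLL (add_mset B (add_mset C \<Gamma>)) \<Delta>"
    using impL.IH(2) by (simp only: add_mset_commute)
  have "G3iLL (add_mset (Imp A B) (add_mset C \<Gamma>)) \<Delta>" by (rule G3iLL.impL[OF a b])
  then show ?case by (simp only: add_mset_commute)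
next
  case (circR \<Gamma> A) show ?case by (rule G3iLL.circR[OF circR.IH])
next
  case (circL B \<Gamma> A)
  have "G3iLL (add_mset B (add_mset C \<Gamma>)) {#Circ A#}"
    using circL.IH by (simp only: add_mset_commute)
  then have "G3iLL (add_mset (Circ B) (add_mset C \<Gamma>)) {#Circ A#}" by (rule G3iLL.circL)
  then show ?case by (simp only: add_mset_commute)
qed

lemma splitm: "add_mset X R = \<Gamma> + \<Gamma>' \<Longrightarrow>
  (\<exists>G. \<Gamma> = add_mset X G \<and> R = G + \<Gamma>') \<or> (\<exists>G. \<Gamma>' = add_mset X G \<and> R = \<Gamma> + G)"
proof (cases "X \<in># \<Gamma>")
  case True
  assume h: "add_mset X R = \<Gamma> + \<Gamma>'"
  have "\<Gamma> = add_mset X (\<Gamma> - {#X#})" using True by simp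
  moreover have "R = (\<Gamma> - {#X#}) + \<Gamma>'" using h True
    by (metis add_mset_remove_trivial insert_DiffM union_mset_add_mset_left)
  ultimately show ?thesis by blast
next
  case False
  assume h: "add_mset X R = \<Gamma> + \<Gamma>'"
  then have X: "X \<in># \<Gamma>'" using False by (metis union_iff union_single_eq_member)
  have "\<Gamma>' = add_mset X (\<Gamma>' - {#X#})" using X by simp
  moreover have "R = \<Gamma> + (\<Gamma>' - {#X#})" using h X
    by (metis add_mset_remove_trivial insert_DiffM union_mset_add_mset_right)
  ultimately show ?thesis by blast
qed

lemma am_add[simp]: "atoms_ms (add_mset A M) = atoms A \<union> atoms_ms M"
  by (simp add: atoms_ms_def)
lemma am_plus[simp]: "atoms_ms (M + N) = atoms_ms M \<union> atoms_ms N"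
  by (simp add: atoms_ms_def)
lemma am_empty[simp]: "atoms_ms {#} = {}"
  by (simp add: atoms_ms_def)

lemma topR: "G3iLL \<Gamma> {#Imp Bot Bot#}"
  by (rule G3iLL.impR, rule G3iLL.botL, simp)

lemma interp: "G3iLL S D \<Longrightarrow> S = \<Gamma> + \<Gamma>' \<Longrightarrow>
  \<exists>\<chi>. G3iLL \<Gamma> {#\<chi>#} \<and> G3iLL (add_mset \<chi> \<Gamma>') D \<and>
              atoms \<chi> \<subseteq> atoms_ms \<Gamma> \<inter> atoms_ms (\<Gamma>' + D)"
proof (induction arbitrary: \<Gamma> \<Gamma>' rule: G3iLL.induct)
  case (ax p \<Gamma>0 \<Gamma> \<Gamma>')
  from splitm[OF ax] show ?case
  proof
    assume "\<exists>G. \<Gamma> = add_mset (At p) G \<and> \<Gamma>0 = G + \<Gamma>'"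
    then obtain G where G: "\<Gamma> = add_mset (At p) G" by blast
    show ?thesis
      by (rule exI[of _ "At p"], simp add: G G3iLL.ax)
  next
    assume "\<exists>G. \<Gamma>' = add_mset (At p) G \<and> \<Gamma>0 = \<Gamma> + G"
    then obtain G where G: "\<Gamma>' = add_mset (At p) G" by blast
    show ?thesis
      by (rule exI[of _ "Imp Bot Bot"], simp add: G topR, metis G3iLL.ax add_mset_commute)
  qed
next
  case (botL \<Delta> \<Gamma>0 \<Gamma> \<Gamma>')
  from splitm[OF botL(2)] show ?case
  proof
    assume "\<exists>G. \<Gamma> = add_mset Bot G \<and> \<Gamma>0 = G + \<Gamma>'"
    then obtain G where G: "\<Gamma> = add_mset Bot G" by blast
    show ?thesis
      by (rule exI[of _ Bot], simp add: G G3iLL.botL[OF botL(1)] G3iLL.botL)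
  next
    assume "\<exists>G. \<Gamma>' = add_mset Bot G \<and> \<Gamma>0 = \<Gamma> + G"
    then obtain G where G: "\<Gamma>' = add_mset Bot G" by blast
    show ?thesis
      by (rule exI[of _ "Imp Bot Bot"], simp add: G topR, metis G3iLL.botL[OF botL(1)] add_mset_commute)
  qed
next
  case (conjR \<Gamma>0 A B \<Gamma> \<Gamma>')
  obtain c1 where c1: "G3iLL \<Gamma> {#c1#}" "G3iLL (add_mset c1 \<Gamma>') {#A#}"
    "atoms c1 \<subseteq> atoms_ms \<Gamma> \<inter> atoms_ms (\<Gamma>' + {#A#})" using conjR by blast
  obtain c2 where c2: "G3iLL \<Gamma> {#c2#}" "G3iLL (add_mset c2 \<Gamma>') {#B#}"
    "atoms c2 \<subseteq> atoms_ms \<Gamma> \<inter> atoms_ms (\<Gamma>' + {#B#})" using conjR by blast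
  have "G3iLL (add_mset (Conj c1 c2) \<Gamma>') {#Conj A B#}"
    apply (rule G3iLL.conjL, rule G3iLL.conjR)
     apply (metis wk c1(2) add_mset_commute)
    apply (metis wk c2(2))
    done
  then show ?case using c1 c2 by (intro exI[of _ "Conj c1 c2"]) (auto intro: G3iLL.conjR)
next
  case (conjL A B \<Gamma>0 \<Delta> \<Gamma> \<Gamma>')
  from splitm[OF conjL(3)] show ?case
  proof
    assume "\<exists>G. \<Gamma> = add_mset (Conj A B) G \<and> \<Gamma>0 = G + \<Gamma>'"
    then obtain G where G: "\<Gamma> = add_mset (Conj A B) G" "\<Gamma>0 = G + \<Gamma>'" by blast
    obtain c where c: "G3iLL (add_mset A (add_mset B G)) {#c#}" "G3iLL (add_mset c \<Gamma>') \<Delta>"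
      "atoms c \<subseteq> atoms_ms (add_mset A (add_mset B G)) \<inter> atoms_ms (\<Gamma>' + \<Delta>)"
      using conjL(2)[of "add_mset A (add_mset B G)" \<Gamma>'] G by auto
    show ?thesis using c G by (intro exI[of _ c]) (auto intro: G3iLL.conjL)
  next
    assume "\<exists>G. \<Gamma>' = add_mset (Conj A B) G \<and> \<Gamma>0 = \<Gamma> + G"
    then obtain G where G: "\<Gamma>' = add_mset (Conj A B) G" "\<Gamma>0 = \<Gamma> + G" by blast
    obtain c where c: "G3iLL \<Gamma> {#c#}" "G3iLL (add_mset c (add_mset A (add_mset B G))) \<Delta>"
      "atoms c \<subseteq> atoms_ms \<Gamma> \<inter> atoms_ms (add_mset A (add_mset B G) + \<Delta>)"
      using conjL(2)[of \<Gamma> "add_mset A (add_mset B G)"] G by auto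
    have "G3iLL (add_mset c \<Gamma>') \<Delta>" unfolding G
      by (metis G3iLL.conjL c(2) add_mset_commute)
    then show ?thesis using c G by (intro exI[of _ c]) auto
  qed
next
  case (disjR1 \<Gamma>0 A B \<Gamma> \<Gamma>')
  then obtain c where c: "G3iLL \<Gamma> {#c#}" "G3iLL (add_mset c \<Gamma>') {#A#}"
    "atoms c \<subseteq> atoms_ms \<Gamma> \<inter> atoms_ms (\<Gamma>' + {#A#})" by blast
  then show ?case by (intro exI[of _ c]) (auto intro: G3iLL.disjR1)
next
  case (disjR2 \<Gamma>0 B A \<Gamma> \<Gamma>')
  then obtain c where c: "G3iLL \<Gamma> {#c#}" "G3iLL (add_mset c \<Gamma>') {#B#}"
    "atoms c \<subseteq> atoms_ms \<Gamma> \<inter> atoms_ms (\<Gamma>' + {#B#})" by blast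
  then show ?case by (intro exI[of _ c]) (auto intro: G3iLL.disjR2)
next
  case (disjL A \<Gamma>0 \<Delta> B \<Gamma> \<Gamma>')
  from splitm[OF disjL(5)] show ?case
  proof
    assume "\<exists>G. \<Gamma> = add_mset (Disj A B) G \<and> \<Gamma>0 = G + \<Gamma>'"
    then obtain G where G: "\<Gamma> = add_mset (Disj A B) G" "\<Gamma>0 = G + \<Gamma>'" by blast
    obtain c1 where c1: "G3iLL (add_mset A G) {#c1#}" "G3iLL (add_mset c1 \<Gamma>') \<Delta>"
      "atoms c1 \<subseteq> atoms_ms (add_mset A G) \<inter> atoms_ms (\<Gamma>' + \<Delta>)"
      using disjL(3)[of "add_mset A G" \<Gamma>'] G by auto
    obtain c2 where c2: "G3iLL (add_mset B G) {#c2#}" "G3iLL (add_mset c2 \<Gamma>') \<Delta>"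
      "atoms c2 \<subseteq> atoms_ms (add_mset B G) \<inter> atoms_ms (\<Gamma>' + \<Delta>)"
      using disjL(4)[of "add_mset B G" \<Gamma>'] G by auto
    have "G3iLL \<Gamma> {#Disj c1 c2#}" unfolding G
      by (rule G3iLL.disjL, rule G3iLL.disjR1, rule c1(1), rule G3iLL.disjR2, rule c2(1))
    moreover have "G3iLL (add_mset (Disj c1 c2) \<Gamma>') \<Delta>"
      by (rule G3iLL.disjL, rule c1(2), rule c2(2))
    ultimately show ?thesis using c1 c2 G by (intro exI[of _ "Disj c1 c2"]) auto
  next
    assume "\<exists>G. \<Gamma>' = add_mset (Disj A B) G \<and> \<Gamma>0 = \<Gamma> + G"
    then obtain G where G: "\<Gamma>' = add_mset (Disj A B) G" "\<Gamma>0 = \<Gamma> + G" by blast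
    obtain c1 where c1: "G3iLL \<Gamma> {#c1#}" "G3iLL (add_mset c1 (add_mset A G)) \<Delta>"
      "atoms c1 \<subseteq> atoms_ms \<Gamma> \<inter> atoms_ms (add_mset A G + \<Delta>)"
      using disjL(3)[of \<Gamma> "add_mset A G"] G by auto
    obtain c2 where c2: "G3iLL \<Gamma> {#c2#}" "G3iLL (add_mset c2 (add_mset B G)) \<Delta>"
      "atoms c2 \<subseteq> atoms_ms \<Gamma> \<inter> atoms_ms (add_mset B G + \<Delta>)"
      using disjL(4)[of \<Gamma> "add_mset B G"] G by auto
    have "G3iLL (add_mset (Conj c1 c2) \<Gamma>') \<Delta>" unfolding G
    proof (rule G3iLL.conjL)
      have a: "G3iLL (add_mset A (add_mset c1 (add_mset c2 G))) \<Delta>"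
        using wk[OF c1(2), of c2] by (simp only: add_mset_commute)
      have b: "G3iLL (add_mset B (add_mset c1 (add_mset c2 G))) \<Delta>"
        using wk[OF c2(2), of c1] by (simp only: add_mset_commute)
      show "G3iLL (add_mset c1 (add_mset c2 (add_mset (Disj A B) G))) \<Delta>"
        using G3iLL.disjL[OF a b] by (simp only: add_mset_commute)
    qed
    moreover have "G3iLL \<Gamma> {#Conj c1 c2#}" using c1 c2 by (blast intro: G3iLL.conjR)
    ultimately show ?thesis using c1 c2 G by (intro exI[of _ "Conj c1 c2"]) auto
  qed
next
  case (impR A \<Gamma>0 B \<Gamma> \<Gamma>')
  obtain c where c: "G3iLL \<Gamma> {#c#}" "G3iLL (add_mset c (add_mset A \<Gamma>')) {#B#}"
    "atoms c \<subseteq> atoms_ms \<Gamma> \<inter> atoms_ms (add_mset A \<Gamma>' + {#B#})"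
    using impR(2)[of \<Gamma> "add_mset A \<Gamma>'"] impR(3) by auto
  have "G3iLL (add_mset c \<Gamma>') {#Imp A B#}"
    by (rule G3iLL.impR, subst add_mset_commute, rule c(2))
  then show ?case using c by (intro exI[of _ c]) auto
next
  case (impL A B \<Gamma>0 \<Delta> \<Gamma> \<Gamma>')
  from splitm[OF impL(5)] show ?case
  proof
    assume "\<exists>G. \<Gamma> = add_mset (Imp A B) G \<and> \<Gamma>0 = G + \<Gamma>'"
    then obtain G where G: "\<Gamma> = add_mset (Imp A B) G" "\<Gamma>0 = G + \<Gamma>'" by blast
    obtain c1 where c1: "G3iLL \<Gamma>' {#c1#}" "G3iLL (add_mset c1 (add_mset (Imp A B) G)) {#A#}"
      "atoms c1 \<subseteq> atoms_ms \<Gamma>' \<inter> atoms_ms (add_mset (Imp A B) G + {#A#})"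
      using impL(3)[of \<Gamma>' "add_mset (Imp A B) G"] G by (auto simp: add.commute)
    obtain c2 where c2: "G3iLL (add_mset B G) {#c2#}" "G3iLL (add_mset c2 \<Gamma>') \<Delta>"
      "atoms c2 \<subseteq> atoms_ms (add_mset B G) \<inter> atoms_ms (\<Gamma>' + \<Delta>)"
      using impL(4)[of "add_mset B G" \<Gamma>'] G by auto
    have "G3iLL \<Gamma> {#Imp c1 c2#}" unfolding G
    proof (rule G3iLL.impR)
      have a: "G3iLL (add_mset (Imp A B) (add_mset c1 G)) {#A#}"
        using c1(2) by (simp only: add_mset_commute)
      have b: "G3iLL (add_mset B (add_mset c1 G)) {#c2#}"
        using wk[OF c2(1), of c1] by (simp only: add_mset_commute)
      show "G3iLL (add_mset c1 (add_mset (Imp A B) G)) {#c2#}"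
        using G3iLL.impL[OF a b] by (simp only: add_mset_commute)
    qed
    moreover have "G3iLL (add_mset (Imp c1 c2) \<Gamma>') \<Delta>"
      by (rule G3iLL.impL, rule wk, rule c1(1), rule c2(2))
    ultimately show ?thesis using c1 c2 G by (intro exI[of _ "Imp c1 c2"]) auto
  next
    assume "\<exists>G. \<Gamma>' = add_mset (Imp A B) G \<and> \<Gamma>0 = \<Gamma> + G"
    then obtain G where G: "\<Gamma>' = add_mset (Imp A B) G" "\<Gamma>0 = \<Gamma> + G" by blast
    obtain c1 where c1: "G3iLL \<Gamma> {#c1#}" "G3iLL (add_mset c1 (add_mset (Imp A B) G)) {#A#}"
      "atoms c1 \<subseteq> atoms_ms \<Gamma> \<inter> atoms_ms (add_mset (Imp A B) G + {#A#})"
      using impL(3)[of \<Gamma> "add_mset (Imp A B) G"] G by auto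
    obtain c2 where c2: "G3iLL \<Gamma> {#c2#}" "G3iLL (add_mset c2 (add_mset B G)) \<Delta>"
      "atoms c2 \<subseteq> atoms_ms \<Gamma> \<inter> atoms_ms (add_mset B G + \<Delta>)"
      using impL(4)[of \<Gamma> "add_mset B G"] G by auto
    have "G3iLL (add_mset (Conj c1 c2) \<Gamma>') \<Delta>" unfolding G
    proof (rule G3iLL.conjL)
      have a: "G3iLL (add_mset (Imp A B) (add_mset c1 (add_mset c2 G))) {#A#}"
        using wk[OF c1(2), of c2] by (simp only: add_mset_commute)
      have b: "G3iLL (add_mset B (add_mset c1 (add_mset c2 G))) \<Delta>"
        using wk[OF c2(2), of c1] by (simp only: add_mset_commute)
      show "G3iLL (add_mset c1 (add_mset c2 (add_mset (Imp A B) G))) \<Delta>"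
        using G3iLL.impL[OF a b] by (simp only: add_mset_commute)
    qed
    moreover have "G3iLL \<Gamma> {#Conj c1 c2#}" using c1 c2 by (blast intro: G3iLL.conjR)
    ultimately show ?thesis using c1 c2 G by (intro exI[of _ "Conj c1 c2"]) auto
  qed
next
  case (circR \<Gamma>0 A \<Gamma> \<Gamma>')
  then obtain c where c: "G3iLL \<Gamma> {#c#}" "G3iLL (add_mset c \<Gamma>') {#A#}"
    "atoms c \<subseteq> atoms_ms \<Gamma> \<inter> atoms_ms (\<Gamma>' + {#A#})" by blast
  then show ?case by (intro exI[of _ c]) (auto intro: G3iLL.circR)
next
  case (circL B \<Gamma>0 A \<Gamma> \<Gamma>')
  from splitm[OF circL(3)] show ?case
  proof
    assume "\<exists>G. \<Gamma> = add_mset (Circ B) G \<and> \<Gamma>0 = G + \<Gamma>'"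
    then obtain G where G: "\<Gamma> = add_mset (Circ B) G" "\<Gamma>0 = G + \<Gamma>'" by blast
    obtain c where c: "G3iLL (add_mset B G) {#c#}" "G3iLL (add_mset c \<Gamma>') {#Circ A#}"
      "atoms c \<subseteq> atoms_ms (add_mset B G) \<inter> atoms_ms (\<Gamma>' + {#Circ A#})"
      using circL(2)[of "add_mset B G" \<Gamma>'] G by auto
    have "G3iLL \<Gamma> {#Circ c#}" unfolding G
      by (rule G3iLL.circL, rule G3iLL.circR, rule c(1))
    moreover have "G3iLL (add_mset (Circ c) \<Gamma>') {#Circ A#}"
      by (rule G3iLL.circL, rule c(2))
    ultimately show ?thesis using c G by (intro exI[of _ "Circ c"]) auto
  next
    assume "\<exists>G. \<Gamma>' = add_mset (Circ B) G \<and> \<Gamma>0 = \<Gamma> + G"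
    then obtain G where G: "\<Gamma>' = add_mset (Circ B) G" "\<Gamma>0 = \<Gamma> + G" by blast
    obtain c where c: "G3iLL \<Gamma> {#c#}" "G3iLL (add_mset c (add_mset B G)) {#Circ A#}"
      "atoms c \<subseteq> atoms_ms \<Gamma> \<inter> atoms_ms (add_mset B G + {#Circ A#})"
      using circL(2)[of \<Gamma> "add_mset B G"] G by auto
    have "G3iLL (add_mset c \<Gamma>') {#Circ A#}" unfolding G
      using G3iLL.circL[of B "add_mset c G" A] c(2) by (simp only: add_mset_commute)
    then show ?thesis using c G by (intro exI[of _ c]) auto
  qed
qed

theorem mainTheorem3:
  fixes \<Gamma> \<Gamma>' \<Delta> :: "'a fm multiset"
  assumes "size \<Delta> \<le> 1"
    and "G3iLL (\<Gamma> + \<Gamma>') \<Delta>"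
  shows "\<exists>\<chi>. G3iLL \<Gamma> {#\<chi>#} \<and> G3iLL (add_mset \<chi> \<Gamma>') \<Delta> \<and>
              atoms \<chi> \<subseteq> atoms_ms \<Gamma> \<inter> atoms_ms (\<Gamma>' + \<Delta>)"
  using interp[OF assms(2) refl] .

end
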